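(* Let $x:[p]\to[r]$ be a strictly increasing set map. Then there exists a unique decomposition of $x$ as $[p]\xrightarrow{\mu}[p']\xrightarrow{\phi}[q]\xrightarrow{\psi}[r]$ such that $\phi$ is non-twisted, $\psi\in\square$, and $\mu=(g_1,\dots,g_{p'})$ where the $g_i:[p]\to[1]$ are non-constant and mutually distinct (i.e. $g_i=g_j$ implies $i=j$). Moreover $p\le p'$, $\mu$ is strictly increasing, and $\mu$ is adjacency-preserving if and only if $p=p'$.
   Context: $[0]=\{()\}$, $[n]=\{0,1\}^n$ ($n\ge1$) with the product order. Face maps $\delta_i^\alpha:[n-1]\to[n]$ insert $\alpha\in\{0,1\}$ at position $i$; $\square$ is the category with objects $[n]$, $n\ge0$, generated by the face maps. A map is adjacency-preserving if strictly increasing and it sends pairs at Hamming distance $1$ to pairs at Hamming distance $1$. A map $\phi:[p']\to[q]$ is non-twisted if it is of the form $(\epsilon_1,\dots,\epsilon_{p'})\mapsto(\epsilon_{i_1},\dots,\epsilon_{i_q})$ with $\{1,\dots,p'\}\subset\{i_1,\dots,i_q\}$ and such that, reading from left to right, the first appearance of $\epsilon_i$ is before the first appearance of $\epsilon_{i+1}$ for every $i$. A map $[p]\to[p']$ is written $(g_1,\dots,g_{p'})$ in terms of its coordinate functions $g_i:[p]\to[1]=\{0,1\}$. *)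

theory Defs
  imports Main
begin

text \<open>Vertices of the cube [n] = {0,1}^n are boolean lists of length n
  (False = 0, True = 1); [0] = {[]}. Maps [p] -> [q] are functions on boolean
  lists, considered only on the carrier cube p.\<close>

definition cube :: "nat \<Rightarrow> bool list set" where
  "cube n = {xs. length xs = n}"

definition cube_le :: "bool list \<Rightarrow> bool list \<Rightarrow> bool" where
  "cube_le a b \<longleftrightarrow> length a = length b \<and> (\<forall>i<length a. a ! i \<longrightarrow> b ! i)"

definition cube_less :: "bool list \<Rightarrow> bool list \<Rightarrow> bool" where
  "cube_less a b \<longleftrightarrow> cube_le a b \<and> a \<noteq> b"

definition strictly_increasing :: "nat \<Rightarrow> (bool list \<Rightarrow> bool list) \<Rightarrow> bool" where
  "strictly_increasing p f \<longleftrightarrow>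
     (\<forall>a\<in>cube p. \<forall>b\<in>cube p. cube_less a b \<longrightarrow> cube_less (f a) (f b))"

definition hamming :: "bool list \<Rightarrow> bool list \<Rightarrow> nat" where
  "hamming a b = card {i. i < length a \<and> a ! i \<noteq> b ! i}"

definition adjacency_preserving :: "nat \<Rightarrow> (bool list \<Rightarrow> bool list) \<Rightarrow> bool" where
  "adjacency_preserving p f \<longleftrightarrow> strictly_increasing p f \<and>
     (\<forall>a\<in>cube p. \<forall>b\<in>cube p. hamming a b = 1 \<longrightarrow> hamming (f a) (f b) = 1)"

text \<open>Face map: insert \<alpha> at (0-based) position i, i.e. the paper's \<delta>_{i+1}^\<alpha>.\<close>
definition face :: "nat \<Rightarrow> bool \<Rightarrow> bool list \<Rightarrow> bool list" where
  "face i \<alpha> xs = take i xs @ \<alpha> # drop i xs"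

inductive cube_map :: "nat \<Rightarrow> nat \<Rightarrow> (bool list \<Rightarrow> bool list) \<Rightarrow> bool" where
  cube_map_id: "cube_map n n id"
| cube_map_face: "cube_map m n f \<Longrightarrow> i \<le> n \<Longrightarrow> cube_map m (Suc n) (face i \<alpha> \<circ> f)"

definition in_square :: "nat \<Rightarrow> nat \<Rightarrow> (bool list \<Rightarrow> bool list) \<Rightarrow> bool" where
  "in_square q r \<psi> \<longleftrightarrow> (\<exists>g. cube_map q r g \<and> (\<forall>a\<in>cube q. \<psi> a = g a))"

text \<open>Non-twisted maps [p'] -> [q]: (e_0,...,e_{p'-1}) |-> (e_{i_1},...,e_{i_q}) (0-based
  indices), every index occurring, and the first occurrence of i before that of i+1.\<close>
definition non_twisted :: "nat \<Rightarrow> nat \<Rightarrow> (bool list \<Rightarrow> bool list) \<Rightarrow> bool" where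
  "non_twisted p' q \<phi> \<longleftrightarrow> (\<exists>is :: nat list.
      length is = q \<and> set is = {..<p'} \<and>
      (\<forall>i. Suc i < p' \<longrightarrow> (\<forall>k<q. is ! k = Suc i \<longrightarrow> (\<exists>k'<k. is ! k' = i))) \<and>
      (\<forall>a\<in>cube p'. \<phi> a = map (\<lambda>j. a ! j) is))"

definition distinct_nonconst_coords :: "nat \<Rightarrow> nat \<Rightarrow> (bool list \<Rightarrow> bool list) \<Rightarrow> bool" where
  "distinct_nonconst_coords p p' \<mu> \<longleftrightarrow> (\<exists>g :: nat \<Rightarrow> bool list \<Rightarrow> bool.
      (\<forall>a\<in>cube p. \<mu> a = map (\<lambda>i. g i a) [0..<p']) \<and>
      (\<forall>i<p'. \<exists>a\<in>cube p. \<exists>b\<in>cube p. g i a \<noteq> g i b) \<and>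
      (\<forall>i<p'. \<forall>j<p'. (\<forall>a\<in>cube p. g i a = g j a) \<longrightarrow> i = j))"

definition is_decomposition ::
  "nat \<Rightarrow> nat \<Rightarrow> (bool list \<Rightarrow> bool list) \<Rightarrow> nat \<Rightarrow> nat \<Rightarrow>
   (bool list \<Rightarrow> bool list) \<Rightarrow> (bool list \<Rightarrow> bool list) \<Rightarrow> (bool list \<Rightarrow> bool list) \<Rightarrow> bool" where
  "is_decomposition p r x p' q \<mu> \<phi> \<psi> \<longleftrightarrow>
     distinct_nonconst_coords p p' \<mu> \<and> non_twisted p' q \<phi> \<and> in_square q r \<psi> \<and>
     (\<forall>a\<in>cube p. x a = \<psi> (\<phi> (\<mu> a)))"

end

theory Submission
  imports Defs
begin

definition W :: "bool list \<Rightarrow> nat set" where "W u = {i. i < length u \<and> u ! i}"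
definition w :: "bool list \<Rightarrow> nat" where "w u = card (W u)"

lemma W_sub: "W u \<subseteq> {..<length u}" by (auto simp: W_def)
lemma W_fin[simp]: "finite (W u)" using W_sub finite_subset by blast
lemma w_le: "w u \<le> length u" unfolding w_def
  by (metis W_sub card_lessThan card_mono finite_lessThan)

lemma le_W: "length u = length v \<Longrightarrow> cube_le u v \<longleftrightarrow> W u \<subseteq> W v"
  by (auto simp: cube_le_def W_def)

lemma W_eq: "length u = length v \<Longrightarrow> W u = W v \<Longrightarrow> u = v"
  apply (rule nth_equalityI, simp)
  by (simp add: W_def set_eq_iff) (metis)

lemma less_w: "cube_less u v \<Longrightarrow> w u < w v"
proof -
  assume a: "cube_less u v"
  then have l: "length u = length v" and s: "W u \<subseteq> W v" and ne: "u \<noteq> v"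
    using le_W by (auto simp: cube_less_def cube_le_def)
  have "W u \<noteq> W v" using W_eq l ne by blast
  then have "W u \<subset> W v" using s by blast
  then show ?thesis unfolding w_def by (simp add: psubset_card_mono)
qed

lemma W_rep_True: "W (replicate n True) = {..<n}" by (auto simp: W_def)
lemma W_rep_False: "W (replicate n False) = {}" by (auto simp: W_def)

lemma ham_le: "length u = length v \<Longrightarrow> cube_le u v \<Longrightarrow> hamming u v = w v - w u"
proof -
  assume l: "length u = length v" and le: "cube_le u v"
  then have s: "W u \<subseteq> W v" using le_W by blast
  have "{i. i < length u \<and> u ! i \<noteq> v ! i} = W v - W u"
    using le l by (auto simp: W_def cube_le_def)
  then show ?thesis unfolding hamming_def w_def using s by (simp add: card_Diff_subset)
qed

lemma ham_bound: "length u = length v \<Longrightarrow> w v \<le> w u + hamming u v"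
proof -
  assume l: "length u = length v"
  let ?D = "{i. i < length u \<and> u ! i \<noteq> v ! i}"
  have "W v \<subseteq> W u \<union> ?D" using l by (auto simp: W_def)
  then have "w v \<le> card (W u \<union> ?D)" unfolding w_def by (simp add: card_mono)
  also have "\<dots> \<le> w u + card ?D" unfolding w_def by (rule card_Un_le)
  finally show ?thesis by (simp add: hamming_def)
qed

lemma ham_sym: "length u = length v \<Longrightarrow> hamming u v = hamming v u"
  unfolding hamming_def by metis

lemma adj_cases:
  assumes "a \<in> cube p" "b \<in> cube p" "hamming a b = 1"
  shows "(cube_less a b \<and> w b = Suc (w a)) \<or> (cube_less b a \<and> w a = Suc (w b))"
proof -
  from assms(3) obtain i where D: "{i. i < length a \<and> a ! i \<noteq> b ! i} = {i}"
    unfolding hamming_def by (auto simp: card_Suc_eq)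
  have la: "length a = p" "length b = p" using assms by (auto simp: cube_def)
  have ip: "i < p" "a ! i \<noteq> b ! i" using D la by auto
  have oth: "\<And>j. j < p \<Longrightarrow> j \<noteq> i \<Longrightarrow> a ! j = b ! j" using D la by auto
  show ?thesis
  proof (cases "a ! i")
    case False
    then have "W b = insert i (W a)" "i \<notin> W a" using ip oth la
      by (auto simp: W_def)
    moreover have "a \<noteq> b" using ip by auto
    ultimately show ?thesis using le_W la
      by (auto simp: cube_less_def w_def)
  next
    case True
    then have "W a = insert i (W b)" "i \<notin> W b" using ip oth la
      by (auto simp: W_def)
    moreover have "a \<noteq> b" using ip by auto
    ultimately show ?thesis using le_W la
      by (auto simp: cube_less_def w_def)
  qed
qed

lemma flip_false:
  assumes "a \<in> cube p" "i \<in> W a"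
  shows "a[i:=False] \<in> cube p" "W (a[i:=False]) = W a - {i}" "cube_less (a[i:=False]) a"
    "w (a[i:=False]) = w a - 1" "hamming (a[i:=False]) a = 1"
proof -
  have ip: "i < length a" "a ! i" using assms by (auto simp: W_def)
  show 1: "a[i:=False] \<in> cube p" using assms by (simp add: cube_def)
  show 2: "W (a[i:=False]) = W a - {i}" using ip by (auto simp: W_def nth_list_update)
  have ne: "a[i:=False] \<noteq> a" using ip by (metis nth_list_update_eq)
  show "cube_less (a[i:=False]) a" using le_W[of "a[i:=False]" a] 2 ne
    by (auto simp: cube_less_def)
  show "w (a[i:=False]) = w a - 1" unfolding w_def 2 using assms(2) by simp
  have "{j. j < length (a[i:=False]) \<and> a[i:=False] ! j \<noteq> a ! j} = {i}"
    using ip by (auto simp: nth_list_update)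
  then show "hamming (a[i:=False]) a = 1" by (simp add: hamming_def)
qed

lemma flip_true:
  assumes "a \<in> cube p" "i < p" "i \<notin> W a"
  shows "a[i:=True] \<in> cube p" "W (a[i:=True]) = insert i (W a)" "cube_less a (a[i:=True])"
    "w (a[i:=True]) = Suc (w a)"
proof -
  have ip: "i < length a" "\<not> a ! i" using assms by (auto simp: W_def cube_def)
  show 1: "a[i:=True] \<in> cube p" using assms by (simp add: cube_def)
  show 2: "W (a[i:=True]) = insert i (W a)" using ip by (auto simp: W_def nth_list_update)
  have ne: "a[i:=True] \<noteq> a" using ip by (metis nth_list_update_eq)
  show "cube_less a (a[i:=True])" using le_W[of a "a[i:=True]"] 2 ne
    by (auto simp: cube_less_def)
  show "w (a[i:=True]) = Suc (w a)" unfolding w_def 2 using assms(3) by simp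
qed

locale chainmap =
  fixes p n :: nat and \<mu> :: "bool list \<Rightarrow> bool list"
  assumes A1: "\<forall>a\<in>cube p. \<mu> a \<in> cube n"
    and A2: "\<forall>a\<in>cube p. \<forall>b\<in>cube p. cube_le a b \<longrightarrow> cube_le (\<mu> a) (\<mu> b)"
    and A3: "\<forall>a\<in>cube p. \<forall>b\<in>cube p. cube_less a b \<longrightarrow> \<mu> a \<noteq> \<mu> b"
    and A4: "\<mu> (replicate p False) = replicate n False" "\<mu> (replicate p True) = replicate n True"
begin

lemma strict: "strictly_increasing p \<mu>"
  unfolding strictly_increasing_def cube_less_def using A2 A3 by (auto simp: cube_less_def)

lemma mless: "a \<in> cube p \<Longrightarrow> b \<in> cube p \<Longrightarrow> cube_less a b \<Longrightarrow> w (\<mu> a) < w (\<mu> b)"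
  using strict less_w unfolding strictly_increasing_def by blast

lemma lower: "a \<in> cube p \<Longrightarrow> w a \<le> w (\<mu> a)"
proof (induction "w a" arbitrary: a)
  case 0 then show ?case by simp
next
  case (Suc k)
  then have "W a \<noteq> {}" unfolding w_def by auto
  then obtain i where i: "i \<in> W a" by blast
  note f = flip_false[OF Suc.prems i]
  have wk: "w (a[i:=False]) = k" using f(4) Suc.hyps(2) by simp
  have "k \<le> w (\<mu> (a[i:=False]))" using Suc.hyps(1)[of "a[i:=False]"] f(1) wk by simp
  moreover have "w (\<mu> (a[i:=False])) < w (\<mu> a)" using mless f Suc.prems by blast
  ultimately show ?case using Suc.hyps(2) by simp
qed

lemma upper: "b \<in> cube p \<Longrightarrow> w (\<mu> b) + p \<le> n + w b"
proof (induction "p - w b" arbitrary: b)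
  case 0
  have lb: "length b = p" using 0(2) by (simp add: cube_def)
  have wle: "w b \<le> p" using w_le[of b] lb by simp
  have wp: "w b = p" using wle 0(1) by linarith
  have "W b \<subseteq> {..<p}" using W_sub[of b] lb by simp
  moreover have "card (W b) = card {..<p}" using wp by (simp add: w_def)
  ultimately have "W b = {..<p}" by (simp add: card_subset_eq)
  then have bt: "b = replicate p True" using W_eq[of b "replicate p True"] lb
    by (simp add: W_rep_True)
  have "w (\<mu> b) = n" unfolding bt A4 by (simp add: w_def W_rep_True)
  then show ?case using wp by simp
next
  case (Suc k)
  have lb: "length b = p" using Suc.prems by (simp add: cube_def)
  have "W b \<noteq> {..<p}"
  proof
    assume "W b = {..<p}"
    then have "w b = p" by (simp add: w_def)
    then show False using Suc.hyps(2) by linarith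
  qed
  then obtain i where i: "i < p" "i \<notin> W b" using W_sub[of b] lb by blast
  note f = flip_true[OF Suc.prems i]
  have kk: "k = p - w (b[i:=True])" using f(4) Suc.hyps(2) by linarith
  have "w (\<mu> (b[i:=True])) + p \<le> n + w (b[i:=True])" using Suc.hyps(1)[OF kk f(1)] .
  moreover have "w (\<mu> b) < w (\<mu> (b[i:=True]))" using mless[OF Suc.prems f(1) f(3)] .
  ultimately show ?case using f(4) by linarith
qed

lemma p_le_n: "p \<le> n"
proof -
  have t: "replicate p True \<in> cube p" by (simp add: cube_def)
  have "p = w (replicate p True)" by (simp add: w_def W_rep_True)
  also have "\<dots> \<le> w (\<mu> (replicate p True))" by (rule lower[OF t])
  also have "\<dots> \<le> n"
  proof -
    have "\<mu> (replicate p True) \<in> cube n" using A1 t by blast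
    then have "length (\<mu> (replicate p True)) = n" by (simp add: cube_def)
    then show ?thesis using w_le[of "\<mu> (replicate p True)"] by simp
  qed
  finally show ?thesis .
qed

lemma adj_upper:
  assumes ad: "adjacency_preserving p \<mu>"
  shows "a \<in> cube p \<Longrightarrow> w (\<mu> a) \<le> w a"
proof (induction "w a" arbitrary: a)
  case 0
  have lb: "length a = p" using 0 by (simp add: cube_def)
  have "W a = {}" using 0 unfolding w_def by simp
  then have "a = replicate p False" using W_eq[of a "replicate p False"] lb by (simp add: W_rep_False)
  then show ?case using A4 by (simp add: w_def W_rep_False)
next
  case (Suc k)
  then have "W a \<noteq> {}" unfolding w_def by auto
  then obtain i where i: "i \<in> W a" by blast
  note f = flip_false[OF Suc.prems i]
  have wk: "w (a[i:=False]) = k" using f(4) Suc.hyps(2) by simp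
  have "w (\<mu> (a[i:=False])) \<le> k" using Suc.hyps(1)[of "a[i:=False]"] f(1) wk by simp
  moreover have "hamming (\<mu> (a[i:=False])) (\<mu> a) = 1" using ad f Suc.prems
    unfolding adjacency_preserving_def by blast
  moreover have "length (\<mu> (a[i:=False])) = length (\<mu> a)" using A1 f Suc.prems
    by (simp add: cube_def)
  ultimately show ?case using ham_bound Suc.hyps(2)
    by (metis add.commute plus_1_eq_Suc add_le_mono1 order_trans)
qed

lemma adj_iff: "adjacency_preserving p \<mu> \<longleftrightarrow> p = n"
proof
  assume ad: "adjacency_preserving p \<mu>"
  have t: "replicate p True \<in> cube p" by (simp add: cube_def)
  have "n = w (\<mu> (replicate p True))" using A4 by (simp add: w_def W_rep_True)
  also have "\<dots> \<le> w (replicate p True)" using adj_upper[OF ad t] .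
  also have "\<dots> = p" by (simp add: w_def W_rep_True)
  finally show "p = n" using p_le_n by simp
next
  assume pn: "p = n"
  have key: "hamming (\<mu> a) (\<mu> b) = 1" if ab: "a \<in> cube p" "b \<in> cube p" "cube_less a b"
    "w b = Suc (w a)" for a b
  proof -
    have l: "length (\<mu> a) = length (\<mu> b)" using A1 ab by (simp add: cube_def)
    have le: "cube_le (\<mu> a) (\<mu> b)" using A2 ab by (simp add: cube_less_def)
    have "w (\<mu> a) < w (\<mu> b)" using mless ab by blast
    moreover have "w (\<mu> b) \<le> w b" using upper[OF ab(2)] pn by simp
    moreover have "w a \<le> w (\<mu> a)" using lower[OF ab(1)] .
    ultimately show ?thesis using ham_le[OF l le] ab(4) by simp
  qed
  show "adjacency_preserving p \<mu>"
    unfolding adjacency_preserving_def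
  proof (intro conjI strict ballI impI)
    fix a b assume ab: "a \<in> cube p" "b \<in> cube p" "hamming a b = 1"
    have l: "length (\<mu> a) = length (\<mu> b)" using A1 ab by (simp add: cube_def)
    from adj_cases[OF ab] show "hamming (\<mu> a) (\<mu> b) = 1"
      using key ab ham_sym[OF l] by metis
  qed
qed

end

fun fill :: "bool option list \<Rightarrow> bool list \<Rightarrow> bool list" where
  "fill [] a = []"
| "fill (None # s) a = hd a # fill s (tl a)"
| "fill (Some b # s) a = b # fill s a"

definition nones :: "bool option list \<Rightarrow> nat" where
  "nones s = length (filter (\<lambda>x. x = None) s)"

lemma nones_simps[simp]: "nones [] = 0" "nones (None # s) = Suc (nones s)"
  "nones (Some b # s) = nones s"
  by (auto simp: nones_def)

lemma fill_insert:
  "i \<le> length s \<Longrightarrow> fill (take i s @ Some \<alpha> # drop i s) a = take i (fill s a) @ \<alpha> # drop i (fill s a)"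
proof (induction s arbitrary: i a)
  case Nil then show ?case by simp
next
  case (Cons oo s)
  show ?case
  proof (cases i)
    case 0 then show ?thesis by (cases oo) auto
  next
    case (Suc j)
    then show ?thesis using Cons by (cases oo) auto
  qed
qed

lemma length_fill[simp]: "length (fill s a) = length s"
  by (induction s a rule: fill.induct) auto

lemma fill_all_None: "length a = n \<Longrightarrow> fill (replicate n None) a = a"
  by (induction n arbitrary: a) (auto simp: length_Suc_conv)

lemma cube_map_slots:
  "cube_map m n f \<Longrightarrow> \<exists>s. length s = n \<and> nones s = m \<and> (\<forall>a\<in>cube m. f a = fill s a)"
proof (induction rule: cube_map.induct)
  case (cube_map_id n)
  show ?case by (rule exI[of _ "replicate n None"]) (auto simp: nones_def cube_def fill_all_None)
next
  case (cube_map_face m n f i \<alpha>)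
  then obtain s where s: "length s = n" "nones s = m" "\<forall>a\<in>cube m. f a = fill s a" by blast
  show ?case
    apply (rule exI[of _ "take i s @ Some \<alpha> # drop i s"])
    using s cube_map_face.hyps(2)
    apply (auto simp: nones_def face_def fill_insert)
    by (metis append_take_drop_id filter_append length_append)
qed

lemma cube_map_lift:
  "cube_map m n f \<Longrightarrow> \<exists>f'. cube_map (Suc m) (Suc n) f' \<and> (\<forall>h a. f' (h # a) = h # f a)"
proof (induction rule: cube_map.induct)
  case (cube_map_id n)
  show ?case using cube_map.cube_map_id by fastforce
next
  case (cube_map_face m n f i \<alpha>)
  then obtain f' where f': "cube_map (Suc m) (Suc n) f'" "\<forall>h a. f' (h # a) = h # f a" by blast
  have "cube_map (Suc m) (Suc (Suc n)) (face (Suc i) \<alpha> \<circ> f')"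
    using cube_map.cube_map_face[OF f'(1)] cube_map_face.hyps(2) by simp
  moreover have "\<forall>h a. (face (Suc i) \<alpha> \<circ> f') (h # a) = h # (face i \<alpha> \<circ> f) a"
    using f'(2) by (simp add: face_def)
  ultimately show ?case by blast
qed

lemma slots_cube_map:
  "\<exists>g. cube_map (nones s) (length s) g \<and> (\<forall>a\<in>cube (nones s). g a = fill s a)"
proof (induction s)
  case Nil
  show ?case using cube_map.cube_map_id[of 0] by (auto simp: cube_def)
next
  case (Cons oo s)
  then obtain g where g: "cube_map (nones s) (length s) g" "\<forall>a\<in>cube (nones s). g a = fill s a" by blast
  show ?case
  proof (cases oo)
    case None
    obtain g' where g': "cube_map (Suc (nones s)) (Suc (length s)) g'" "\<forall>h a. g' (h # a) = h # g a"
      using cube_map_lift[OF g(1)] by blast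
    have "\<forall>a\<in>cube (Suc (nones s)). g' a = fill (None # s) a"
    proof
      fix a assume a: "a \<in> cube (Suc (nones s))"
      then obtain h t where "a = h # t" "t \<in> cube (nones s)" by (cases a) (auto simp: cube_def)
      then show "g' a = fill (None # s) a" using g' g by simp
    qed
    then show ?thesis using g' None by auto
  next
    case (Some b)
    have "cube_map (nones s) (Suc (length s)) (face 0 b \<circ> g)"
      using cube_map.cube_map_face[OF g(1), of 0 b] by simp
    moreover have "\<forall>a\<in>cube (nones s). (face 0 b \<circ> g) a = fill (Some b # s) a"
      using g(2) by (simp add: face_def)
    ultimately show ?thesis using Some by auto
  qed
qed

fun fillF :: "bool list set \<Rightarrow> bool option list \<Rightarrow> (bool list \<Rightarrow> bool) list \<Rightarrow> (bool list \<Rightarrow> bool) list" where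
  "fillF C [] Fs = []"
| "fillF C (None # s) Fs = hd Fs # fillF C s (tl Fs)"
| "fillF C (Some b # s) Fs = (\<lambda>a. if a \<in> C then b else False) # fillF C s Fs"

lemma length_fillF[simp]: "length (fillF C s Fs) = length s"
  by (induction C s Fs rule: fillF.induct) auto

lemma fillF_eval: "a \<in> C \<Longrightarrow> length Fs = nones s \<Longrightarrow>
    map (\<lambda>f. f a) (fillF C s Fs) = fill s (map (\<lambda>f. f a) Fs)"
proof (induction s arbitrary: Fs)
  case Nil then show ?case by simp
next
  case (Cons oo s)
  then show ?case by (cases oo; cases Fs) auto
qed

definition nc :: "bool list set \<Rightarrow> (bool list \<Rightarrow> bool) \<Rightarrow> bool" where
  "nc C f \<longleftrightarrow> (\<exists>a\<in>C. \<exists>b\<in>C. f a \<noteq> f b)"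

definition restr :: "bool list set \<Rightarrow> (bool list \<Rightarrow> bool) \<Rightarrow> bool" where
  "restr C f \<longleftrightarrow> (\<forall>a. a \<notin> C \<longrightarrow> f a = False)"

definition Sx :: "bool list set \<Rightarrow> bool list \<Rightarrow> (bool list \<Rightarrow> bool) list \<Rightarrow> bool option list" where
  "Sx C z X = map (\<lambda>f. if nc C f then None else Some (f z)) X"

lemma nones_Sx: "nones (Sx C z X) = length (filter (nc C) X)"
  by (induction X) (auto simp: Sx_def)

lemma length_Sx[simp]: "length (Sx C z X) = length X" by (simp add: Sx_def)

lemma fillF_decomp: "\<forall>f\<in>set X. restr C f \<Longrightarrow> z \<in> C \<Longrightarrow> X = fillF C (Sx C z X) (filter (nc C) X)"
proof (induction X)
  case Nil then show ?case by (simp add: Sx_def)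
next
  case (Cons f X)
  have IH0: "X = fillF C (Sx C z X) (filter (nc C) X)" by (rule Cons.IH) (use Cons.prems in auto)
  have IH: "fillF C (Sx C z X) (filter (nc C) X) = X" using IH0 by (rule sym)
  show ?case
  proof (cases "nc C f")
    case True
    have "fillF C (Sx C z (f # X)) (filter (nc C) (f # X)) = f # fillF C (Sx C z X) (filter (nc C) X)"
      using True by (simp add: Sx_def)
    then show ?thesis using IH by simp
  next
    case False
    have fdef: "f = (\<lambda>a. if a \<in> C then f z else False)"
    proof (rule ext)
      fix a
      have rf: "restr C f" using Cons.prems(1) by simp
      show "f a = (if a \<in> C then f z else False)"
        using False rf Cons.prems(2) unfolding nc_def restr_def by (metis (full_types))
    qed
    have "fillF C (Sx C z (f # X)) (filter (nc C) (f # X)) = (\<lambda>a. if a \<in> C then f z else False) # fillF C (Sx C z X) (filter (nc C) X)"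
      using False by (simp add: Sx_def)
    then have "fillF C (Sx C z (f # X)) (filter (nc C) (f # X)) = (\<lambda>a. if a \<in> C then f z else False) # X"
      using IH by simp
    then show ?thesis using fdef by metis
  qed
qed

lemma fillF_unique: "\<forall>f\<in>set Fs. nc C f \<Longrightarrow> length Fs = nones s \<Longrightarrow> z \<in> C \<Longrightarrow> X = fillF C s Fs \<Longrightarrow>
    s = Sx C z X \<and> Fs = filter (nc C) X"
proof (induction s arbitrary: Fs X)
  case Nil then show ?case by (simp add: Sx_def)
next
  case (Cons oo s)
  show ?case
  proof (cases oo)
    case None
    then obtain f Fs' where Fs: "Fs = f # Fs'" using Cons.prems by (cases Fs) auto
    then show ?thesis using Cons.IH[of Fs' "fillF C s Fs'"] Cons.prems None by (auto simp: Sx_def)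
  next
    case (Some b)
    have "\<not> nc C (\<lambda>a. if a \<in> C then b else False)" by (auto simp: nc_def)
    then show ?thesis using Cons.IH[of Fs "fillF C s Fs"] Cons.prems Some by (auto simp: Sx_def)
  qed
qed

lemma restr_fillF: "\<forall>f\<in>set Fs. restr C f \<Longrightarrow> length Fs = nones s \<Longrightarrow> \<forall>f\<in>set (fillF C s Fs). restr C f"
proof (induction s arbitrary: Fs)
  case (Cons oo s)
  show ?case
  proof (cases oo)
    case None
    then obtain f Fs' where "Fs = f # Fs'" using Cons.prems by (cases Fs) auto
    then show ?thesis using Cons None by auto
  next
    case (Some b)
    then show ?thesis using Cons by (auto simp: restr_def)
  qed
qed simp

definition FA :: "nat \<Rightarrow> nat list \<Rightarrow> bool" where
  "FA n is \<longleftrightarrow> (\<forall>i. Suc i < n \<longrightarrow> (\<forall>k<length is. is ! k = Suc i \<longrightarrow> (\<exists>k'<k. is ! k' = i)))"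

lemma ex_step: "length is' = length vs' \<Longrightarrow> set is' = {..<n} \<Longrightarrow> FA n is' \<Longrightarrow>
   \<forall>k<length vs'. G (is' ! k) = vs' ! k \<Longrightarrow> inj_on G {..<n} \<Longrightarrow>
   \<exists>n G is. length is = length vs' \<and> set is = {..<n} \<and> FA n is \<and>
   (\<forall>k<length vs'. G (is ! k) = vs' ! k) \<and> inj_on G {..<n}"
  apply (rule exI[of _ n])
  apply (rule exI[of _ G])
  apply (rule exI[of _ is'])
  apply (intro conjI)
  apply assumption+
  done

lemma fa_exists: "\<exists>n G is. length is = length vs \<and> set is = {..<n} \<and> FA n is \<and>
   (\<forall>k<length vs. G (is ! k) = vs ! k) \<and> inj_on G {..<n}"
proof (induction vs rule: rev_induct)
  case Nil
  show ?case by (rule exI[of _ 0]) (auto simp: FA_def)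
next
  case (snoc v vs)
  then obtain n G "is" where h: "length is = length vs" "set is = {..<n}" "FA n is"
    "\<forall>k<length vs. G (is ! k) = vs ! k" "inj_on G {..<n}" by blast
  show ?case
  proof (cases "v \<in> G ` {..<n}")
    case True
    then obtain j where j: "j < n" "v = G j" by auto
    have FA1: "FA n (is @ [j])" unfolding FA_def
    proof (intro allI impI)
      fix i k assume a: "Suc i < n" "k < length (is @ [j])" "(is @ [j]) ! k = Suc i"
      show "\<exists>k'<k. (is @ [j]) ! k' = i"
      proof (cases "k < length is")
        case True
        then obtain k' where "k' < k" "is ! k' = i" using h(3) a unfolding FA_def by (auto simp: nth_append)
        then show ?thesis using True by (auto simp: nth_append intro!: exI[of _ k'])
      next
        case False
        then have "k = length is" using a by simp
        moreover have "i \<in> set is" using h(2) a by auto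
        ultimately show ?thesis by (auto simp: in_set_conv_nth nth_append)
      qed
    qed
    have G1: "\<forall>k<length (vs @ [v]). G ((is @ [j]) ! k) = (vs @ [v]) ! k"
    proof (intro allI impI)
      fix k assume "k < length (vs @ [v])"
      then consider "k < length vs" | "k = length vs" by fastforce
      then show "G ((is @ [j]) ! k) = (vs @ [v]) ! k"
      proof cases
        case 1
        then show ?thesis using h(1,4) by (simp add: nth_append)
      next
        case 2
        then show ?thesis using h(1) j by (simp add: nth_append)
      qed
    qed
    have L1: "length (is @ [j]) = length (vs @ [v])" and S1: "set (is @ [j]) = {..<n}"
      using h(1,2) j by auto

    from ex_step[OF L1 S1 FA1 G1 h(5)] show ?thesis .
  next
    case False
    have FA1: "FA (Suc n) (is @ [n])" unfolding FA_def
    proof (intro allI impI)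
      fix i k assume a: "Suc i < Suc n" "k < length (is @ [n])" "(is @ [n]) ! k = Suc i"
      show "\<exists>k'<k. (is @ [n]) ! k' = i"
      proof (cases "k < length is")
        case True
        have ik: "is ! k = Suc i" using a(3) True by (simp add: nth_append)
        then have "Suc i < n" using True h(2) by (metis lessThan_iff nth_mem)
        then obtain k' where "k' < k" "is ! k' = i"
          using h(3)[unfolded FA_def, rule_format, OF _ True ik] by blast
        then show ?thesis using True by (auto simp: nth_append intro!: exI[of _ k'])
      next
        case False
        then have "k = length is" using a by simp
        moreover have "i \<in> set is" using h(2) a \<open>k = length is\<close> by auto
        ultimately show ?thesis by (auto simp: in_set_conv_nth nth_append)
      qed
    qed
    have G1: "\<forall>k<length (vs @ [v]). (G(n := v)) ((is @ [n]) ! k) = (vs @ [v]) ! k"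
    proof (intro allI impI)
      fix k assume "k < length (vs @ [v])"
      then consider "k < length vs" | "k = length vs" by fastforce
      then show "(G(n := v)) ((is @ [n]) ! k) = (vs @ [v]) ! k"
      proof cases
        case 1
        then have "is ! k < n" using h(1,2) by (metis lessThan_iff nth_mem)
        then show ?thesis using 1 h(1,4) by (auto simp: nth_append)
      qed (use h(1) in \<open>auto simp: nth_append\<close>)
    qed
    have I1: "inj_on (G(n := v)) {..<Suc n}"
    proof -
      have "inj_on (G(n := v)) {..<n}" using h(5) by (simp add: inj_on_def)
      moreover have "v \<notin> (G(n := v)) ` ({..<n} - {n})" using False by auto
      ultimately show ?thesis by (simp add: lessThan_Suc)
    qed
    have L1: "length (is @ [n]) = length (vs @ [v])" and S1: "set (is @ [n]) = {..<Suc n}"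
      using h(1,2) by (auto simp: lessThan_Suc)
    from ex_step[OF L1 S1 FA1 G1 I1] show ?thesis .
  qed
qed


lemma fa_initial:
  assumes "set is = {..<n}" "FA n is" "k \<le> length is"
  shows "set (take k is) = {..<card (set (take k is))}"
  using assms(3)
proof (induction k)
  case 0 then show ?case by simp
next
  case (Suc k)
  have k: "k < length is" using Suc.prems by simp
  have e: "set (take (Suc k) is) = insert (is ! k) (set (take k is))"
    using k by (simp add: take_Suc_conv_app_nth)
  define m where "m = card (set (take k is))"
  have IH: "set (take k is) = {..<m}" unfolding m_def by (rule Suc.IH) (use Suc.prems in simp)
  show ?case
  proof (cases "is ! k \<in> set (take k is)")
    case True
    then have "set (take (Suc k) is) = set (take k is)" using e by auto
    then show ?thesis using IH by simp
  next
    case False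
    then have ge: "is ! k \<ge> m" using IH by auto
    have "is ! k = m"
    proof (rule ccontr)
      assume "is ! k \<noteq> m"
      then obtain i where i: "is ! k = Suc i" "i \<ge> m" using ge by (cases "is ! k") auto
      have "is ! k \<in> set is" using k by simp
      then have "Suc i < n" using i assms(1) by auto
      then obtain k' where "k' < k" "is ! k' = i" using assms(2) i k unfolding FA_def by blast
      then have "i \<in> set (take k is)" using k by (auto simp: in_set_conv_nth)
      then show False using IH i by auto
    qed
    then show ?thesis using e IH by (simp add: lessThan_Suc)
  qed
qed

lemma fa_new:
  assumes "set is = {..<n}" "FA n is" "k < length is" "is ! k \<notin> set (take k is)"
  shows "is ! k = card (set (take k is))"
proof -
  define c where "c = card (set (take k is))"
  define d where "d = card (set (take (Suc k) is))"
  have e: "set (take (Suc k) is) = insert (is ! k) (set (take k is))"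
    using assms(3) by (simp add: take_Suc_conv_app_nth)
  have A: "set (take (Suc k) is) = {..<d}" unfolding d_def
    by (rule fa_initial[OF assms(1,2)]) (use assms(3) in simp)
  have B: "set (take k is) = {..<c}" unfolding c_def
    by (rule fa_initial[OF assms(1,2)]) (use assms(3) in simp)
  have "d = Suc c" unfolding d_def e using assms(4) B by simp
  then have "is ! k < Suc c" using A e by auto
  moreover have "\<not> is ! k < c" using assms(4) B by auto
  ultimately show ?thesis unfolding c_def[symmetric] by simp
qed

lemma fa_unique:
  assumes l1: "length is1 = length vs" and s1: "set is1 = {..<n1}" and f1: "FA n1 is1"
    and g1: "\<forall>k<length vs. G1 (is1 ! k) = vs ! k" and i1: "inj_on G1 {..<n1}"
    and l2: "length is2 = length vs" and s2: "set is2 = {..<n2}" and f2: "FA n2 is2"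
    and g2: "\<forall>k<length vs. G2 (is2 ! k) = vs ! k" and i2: "inj_on G2 {..<n2}"
  shows "is1 = is2"
proof -
  have "\<forall>k'<k. is1 ! k' = is2 ! k'" if "k \<le> length vs" for k
    using that
  proof (induction k)
    case 0 then show ?case by simp
  next
    case (Suc k)
    have k: "k < length vs" using Suc.prems by simp
    have IH: "\<forall>k'<k. is1 ! k' = is2 ! k'" using Suc.IH Suc.prems by simp
    have "is1 ! k = is2 ! k"
    proof (cases "\<exists>k'<k. vs ! k' = vs ! k")
      case True
      then obtain k' where k': "k' < k" "vs ! k' = vs ! k" by blast
      have kk: "k' < length vs" using k k' by simp
      have "is1 ! k' \<in> {..<n1}" "is1 ! k \<in> {..<n1}" unfolding s1[symmetric] using l1 k kk by simp_all
      moreover have "G1 (is1 ! k') = G1 (is1 ! k)" using g1 k kk k' by simp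
      ultimately have "is1 ! k' = is1 ! k" using i1 by (simp add: inj_on_def)
      moreover
      have "is2 ! k' \<in> {..<n2}" "is2 ! k \<in> {..<n2}" unfolding s2[symmetric] using l2 k kk by simp_all
      moreover have "G2 (is2 ! k') = G2 (is2 ! k)" using g2 k kk k' by simp
      ultimately have "is2 ! k' = is2 ! k" using i2 by (simp add: inj_on_def)
      then show ?thesis using IH k' \<open>is1 ! k' = is1 ! k\<close> by simp
    next
      case False
      have tk: "take k is1 = take k is2" using IH l1 l2 k by (auto intro: nth_equalityI)
      have n1: "is1 ! k \<notin> set (take k is1)"
      proof
        assume "is1 ! k \<in> set (take k is1)"
        then obtain k' where "k' < k" "is1 ! k' = is1 ! k" using k l1 by (auto simp: in_set_conv_nth)
        then show False using False g1 k by (metis less_trans)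
      qed
      have n2: "is2 ! k \<notin> set (take k is2)"
      proof
        assume "is2 ! k \<in> set (take k is2)"
        then obtain k' where "k' < k" "is2 ! k' = is2 ! k" using k l2 by (auto simp: in_set_conv_nth)
        then show False using False g2 k by (metis less_trans)
      qed
      show ?thesis using fa_new[OF s1 f1 _ n1] fa_new[OF s2 f2 _ n2] k l1 l2 tk by simp
    qed
    then show ?case using IH less_Suc_eq by auto
  qed
  from this[OF order_refl] have "\<forall>k'<length vs. is1 ! k' = is2 ! k'" .
  then show ?thesis using l1 l2 by (simp add: nth_equalityI)
qed

lemma mono_x:
  assumes si: "strictly_increasing p x" and xr: "\<forall>a\<in>cube p. x a \<in> cube r"
    and a: "a \<in> cube p" and b: "b \<in> cube p" and le: "cube_le a b"
  shows "cube_le (x a) (x b)"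
proof (cases "a = b")
  case True
  then show ?thesis by (simp add: cube_le_def)
next
  case False
  then have "cube_less a b" using le by (simp add: cube_less_def)
  then show ?thesis using si a b unfolding strictly_increasing_def cube_less_def by blast
qed

theorem proposition8p4:
  fixes p r :: nat and x :: "bool list \<Rightarrow> bool list"
  assumes "\<forall>a\<in>cube p. x a \<in> cube r"
    and "strictly_increasing p x"
  shows "\<exists>p' q \<mu> \<phi> \<psi>.
           is_decomposition p r x p' q \<mu> \<phi> \<psi> \<and>
           (\<forall>p'' q' \<mu>' \<phi>' \<psi>'. is_decomposition p r x p'' q' \<mu>' \<phi>' \<psi>' \<longrightarrow>
              p'' = p' \<and> q' = q \<and> (\<forall>a\<in>cube p. \<mu>' a = \<mu> a) \<and>
              (\<forall>a\<in>cube p'. \<phi>' a = \<phi> a) \<and> (\<forall>a\<in>cube q. \<psi>' a = \<psi> a)) \<and>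
           p \<le> p' \<and> strictly_increasing p \<mu> \<and>
           (adjacency_preserving p \<mu> \<longleftrightarrow> p = p')"
proof -
  note xr = assms(1) and si = assms(2)
  define C where "C = cube p"
  define z where "z = replicate p False"
  have zC: "z \<in> C" by (simp add: C_def z_def cube_def)
  define rf where "rf k = (\<lambda>a. if a \<in> C then x a ! k else False)" for k
  define X where "X = map rf [0..<r]"
  define vs where "vs = filter (nc C) X"
  obtain n G ix where h: "length ix = length vs" "set ix = {..<n}" "FA n ix"
    "\<forall>k<length vs. G (ix ! k) = vs ! k" "inj_on G {..<n}"
    using fa_exists[of vs] by blast
  define \<mu> where "\<mu> a = map (\<lambda>j. G j a) [0..<n]" for a
  define \<phi> where "\<phi> a = map (\<lambda>j. a ! j) ix" for a :: "bool list"
  define S where "S = Sx C z X"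
  define q where "q = length vs"
  define \<psi> where "\<psi> = fill S"
  have lX: "length X = r" by (simp add: X_def)
  have nS: "nones S = q" by (simp add: S_def q_def vs_def nones_Sx)
  have lS: "length S = r" by (simp add: S_def lX)
  obtain \<psi>0 where psi0: "cube_map (nones S) (length S) \<psi>0" "\<forall>a\<in>cube (nones S). \<psi>0 a = fill S a"
    using slots_cube_map[of S] by blast
  have restrX: "\<forall>f\<in>set X. restr C f" by (auto simp: X_def rf_def restr_def)
  have Gin: "G j \<in> set vs" if "j < n" for j
  proof -
    have "j \<in> set ix" using h(2) that by simp
    then obtain k where "k < length ix" "ix ! k = j" by (auto simp: in_set_conv_nth)
    then show ?thesis using h(1,4) by (metis nth_mem)
  qed
  have Gprop: "nc C (G j) \<and> restr C (G j) \<and> (\<exists>k<r. G j = rf k)" if "j < n" for j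
  proof -
    have "G j \<in> set X" "nc C (G j)" using Gin[OF that] by (auto simp: vs_def)
    moreover then have "restr C (G j)" using restrX by blast
    moreover from \<open>G j \<in> set X\<close> obtain k where "k < r" "G j = rf k" by (auto simp: X_def)
    ultimately show ?thesis by blast
  qed
  have mapG: "map G ix = vs" by (rule nth_equalityI) (use h(1,4) in simp_all)
  have evalX: "map (\<lambda>f. f a) X = x a" if "a \<in> C" for a
  proof -
    have "length (x a) = r" using xr that by (simp add: C_def cube_def)
    then show ?thesis using that by (intro nth_equalityI) (simp_all add: X_def rf_def)
  qed
  have decomp: "fill S (\<phi> (\<mu> a)) = x a" if a: "a \<in> C" for a
  proof -
    have "\<phi> (\<mu> a) = map (\<lambda>j. G j a) ix"
      unfolding \<phi>_def \<mu>_def using h(2) by (auto intro!: map_cong)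
    also have "\<dots> = map (\<lambda>f. f a) vs" unfolding mapG[symmetric] by simp
    finally have e: "\<phi> (\<mu> a) = map (\<lambda>f. f a) vs" .
    have "fill S (map (\<lambda>f. f a) vs) = map (\<lambda>f. f a) (fillF C S vs)"
      using fillF_eval[OF a, of vs S] nS by (simp add: q_def)
    also have "fillF C S vs = X" unfolding S_def vs_def using fillF_decomp[OF restrX zC] by simp
    finally show ?thesis using e evalX[OF a] by simp
  qed
  have Grestr_eq: "G i = G j" if "i < n" "j < n" "\<forall>a\<in>C. G i a = G j a" for i j
  proof
    fix a show "G i a = G j a"
      using that Gprop[OF that(1)] Gprop[OF that(2)] by (cases "a \<in> C") (auto simp: restr_def)
  qed
  have isdec: "is_decomposition p r x n q \<mu> \<phi> \<psi>"
    unfolding is_decomposition_def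
  proof (intro conjI)
    show "distinct_nonconst_coords p n \<mu>"
      unfolding distinct_nonconst_coords_def
    proof (intro exI[of _ G] conjI)
      show "\<forall>a\<in>cube p. \<mu> a = map (\<lambda>i. G i a) [0..<n]" by (simp add: \<mu>_def)
      show "\<forall>i<n. \<exists>a\<in>cube p. \<exists>b\<in>cube p. G i a \<noteq> G i b"
        using Gprop by (auto simp: nc_def C_def)
      show "\<forall>i<n. \<forall>j<n. (\<forall>a\<in>cube p. G i a = G j a) \<longrightarrow> i = j"
        using Grestr_eq h(5) by (auto simp: C_def inj_on_def)
    qed
    show "non_twisted n q \<phi>"
      unfolding non_twisted_def
      apply (rule exI[of _ ix])
      using h(1,2,3) by (auto simp: q_def FA_def \<phi>_def)
    show "in_square q r \<psi>"
      unfolding in_square_def using psi0 nS lS by (auto simp: \<psi>_def)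
    show "\<forall>a\<in>cube p. x a = \<psi> (\<phi> (\<mu> a))" using decomp by (simp add: \<psi>_def C_def)
  qed
  have uniq: "p'' = n \<and> q' = q \<and> (\<forall>a\<in>cube p. \<mu>' a = \<mu> a) \<and>
              (\<forall>a\<in>cube n. \<phi>' a = \<phi> a) \<and> (\<forall>a\<in>cube q. \<psi>' a = \<psi> a)"
    if dec: "is_decomposition p r x p'' q' \<mu>' \<phi>' \<psi>'" for p'' q' \<mu>' \<phi>' \<psi>'
  proof -
    from dec obtain g' where g': "\<forall>a\<in>cube p. \<mu>' a = map (\<lambda>i. g' i a) [0..<p'']"
      "\<forall>i<p''. \<exists>a\<in>cube p. \<exists>b\<in>cube p. g' i a \<noteq> g' i b"
      "\<forall>i<p''. \<forall>j<p''. (\<forall>a\<in>cube p. g' i a = g' j a) \<longrightarrow> i = j"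
      unfolding is_decomposition_def distinct_nonconst_coords_def by blast
    from dec obtain ix' where ix': "length ix' = q'" "set ix' = {..<p''}"
      "\<forall>i. Suc i < p'' \<longrightarrow> (\<forall>k<q'. ix' ! k = Suc i \<longrightarrow> (\<exists>k'<k. ix' ! k' = i))"
      "\<forall>a\<in>cube p''. \<phi>' a = map (\<lambda>j. a ! j) ix'"
      unfolding is_decomposition_def non_twisted_def by blast
    from dec obtain g\<psi> where gp: "cube_map q' r g\<psi>" "\<forall>a\<in>cube q'. \<psi>' a = g\<psi> a"
      unfolding is_decomposition_def in_square_def by blast
    obtain s where s: "length s = r" "nones s = q'" "\<forall>a\<in>cube q'. g\<psi> a = fill s a"
      using cube_map_slots[OF gp(1)] by blast
    have xdec: "\<forall>a\<in>cube p. x a = \<psi>' (\<phi>' (\<mu>' a))" using dec by (simp add: is_decomposition_def)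
    define G2 where "G2 j = (\<lambda>a. if a \<in> C then g' j a else False)" for j
    have G2r: "restr C (G2 j)" for j by (simp add: G2_def restr_def)
    have G2nc: "nc C (G2 j)" if "j < p''" for j
      using g'(2) that by (auto simp: G2_def nc_def C_def)
    have ix'lt: "ix' ! k < p''" if "k < q'" for k using ix'(1,2) that by (metis lessThan_iff nth_mem)
    have lF: "length (map G2 ix') = nones s" using ix'(1) s(2) by simp
    have xa: "x a = map (\<lambda>f. f a) (fillF C s (map G2 ix'))" if a: "a \<in> C" for a
    proof -
      have ma: "\<mu>' a = map (\<lambda>i. g' i a) [0..<p'']" using g'(1) a by (simp add: C_def)
      have "\<mu>' a \<in> cube p''" using ma by (simp add: cube_def)
      then have "\<phi>' (\<mu>' a) = map (\<lambda>j. \<mu>' a ! j) ix'" using ix'(4) by blast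
      also have "\<dots> = map (\<lambda>f. f a) (map G2 ix')"
        unfolding ma using ix'(2) a by (auto simp: G2_def intro!: map_cong)
      finally have e: "\<phi>' (\<mu>' a) = map (\<lambda>f. f a) (map G2 ix')" .
      have "\<phi>' (\<mu>' a) \<in> cube q'" using e ix'(1) by (simp add: cube_def)
      then have "\<psi>' (\<phi>' (\<mu>' a)) = fill s (\<phi>' (\<mu>' a))" using gp(2) s(3) by simp
      then have "x a = fill s (map (\<lambda>f. f a) (map G2 ix'))" using xdec a e by (simp add: C_def)
      also have "\<dots> = map (\<lambda>f. f a) (fillF C s (map G2 ix'))"
        using fillF_eval[OF a lF] by simp
      finally show ?thesis .
    qed
    have rF: "\<forall>f\<in>set (fillF C s (map G2 ix')). restr C f"
      using restr_fillF[of "map G2 ix'" C s] G2r lF by auto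
    have XF: "X = fillF C s (map G2 ix')"
    proof (rule nth_equalityI)
      show "length X = length (fillF C s (map G2 ix'))" using lX s(1) by simp
      fix k assume k: "k < length X"
      show "X ! k = fillF C s (map G2 ix') ! k"
      proof
        fix a
        show "(X ! k) a = (fillF C s (map G2 ix') ! k) a"
        proof (cases "a \<in> C")
          case True
          have "(X ! k) a = map (\<lambda>f. f a) X ! k" using k by simp
          also have "\<dots> = map (\<lambda>f. f a) (fillF C s (map G2 ix')) ! k"
            using evalX[OF True] xa[OF True] by simp
          also have "\<dots> = (fillF C s (map G2 ix') ! k) a" using k lX s(1) by simp
          finally show ?thesis .
        next
          case False
          have "X ! k \<in> set X" using k by simp
          then have "(X ! k) a = False" using restrX False by (auto simp: restr_def)
          moreover have "fillF C s (map G2 ix') ! k \<in> set (fillF C s (map G2 ix'))"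
            using k lX s(1) by simp
          then have "(fillF C s (map G2 ix') ! k) a = False" using rF False by (auto simp: restr_def)
          ultimately show ?thesis by simp
        qed
      qed
    qed
    have allnc: "\<forall>f\<in>set (map G2 ix'). nc C (f)" using G2nc ix'(2) by auto
    from fillF_unique[OF allnc lF zC XF]
    have sS: "s = S" and mv: "map G2 ix' = vs" by (auto simp: S_def vs_def)
    have l2: "length ix' = length vs" using mv by (metis length_map)
    have g2: "\<forall>k<length vs. G2 (ix' ! k) = vs ! k" using mv l2 by (metis nth_map)
    have i2: "inj_on G2 {..<p''}"
    proof (rule inj_onI)
      fix i j assume ij: "i \<in> {..<p''}" "j \<in> {..<p''}" "G2 i = G2 j"
      then have "\<forall>a\<in>cube p. g' i a = g' j a"
        by (metis (full_types) C_def G2_def)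
      then show "i = j" using g'(3) ij by blast
    qed
    have f2: "FA p'' ix'" unfolding FA_def using ix'(1,3) by simp
    have eqix: "ix = ix'"
      by (rule fa_unique[OF h(1,2,3,4,5) l2 ix'(2) f2 g2 i2])
    have pn: "p'' = n" using eqix h(2) ix'(2) by (metis lessThan_eq_iff)
    have qq: "q' = q" using ix'(1) l2 by (simp add: q_def)
    have GG: "G2 j = G j" if "j < n" for j
    proof -
      have "j \<in> set ix" using h(2) that by simp
      then obtain k where "k < length ix" "ix ! k = j" by (auto simp: in_set_conv_nth)
      then show ?thesis using h(1,4) g2 eqix by metis
    qed
    have m1: "\<forall>a\<in>cube p. \<mu>' a = \<mu> a"
    proof
      fix a assume a: "a \<in> cube p"
      have "\<mu>' a = map (\<lambda>i. g' i a) [0..<n]" using g'(1) a pn by simp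
      also have "\<dots> = map (\<lambda>i. G2 i a) [0..<n]" using a by (simp add: G2_def C_def)
      also have "\<dots> = \<mu> a" unfolding \<mu>_def using GG by simp
      finally show "\<mu>' a = \<mu> a" .
    qed
    have m2: "\<forall>a\<in>cube n. \<phi>' a = \<phi> a" using ix'(4) pn eqix by (simp add: \<phi>_def)
    have m3: "\<forall>a\<in>cube q. \<psi>' a = \<psi> a" using gp(2) s(3) qq sS by (simp add: \<psi>_def)
    show ?thesis using pn qq m1 m2 m3 by blast
  qed
  have A1: "\<forall>a\<in>cube p. \<mu> a \<in> cube n" by (simp add: \<mu>_def cube_def)
  have muk: "\<mu> a ! j = x a ! k" if "a \<in> C" "j < n" "G j = rf k" for a j k
    using that by (simp add: \<mu>_def rf_def)
  have A2: "\<forall>a\<in>cube p. \<forall>b\<in>cube p. cube_le a b \<longrightarrow> cube_le (\<mu> a) (\<mu> b)"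
  proof (intro ballI impI)
    fix a b assume ab: "a \<in> cube p" "b \<in> cube p" "cube_le a b"
    have xle: "cube_le (x a) (x b)" by (rule mono_x[OF si xr ab])
    have "length (x a) = r" using xr ab by (simp add: cube_def)
    show "cube_le (\<mu> a) (\<mu> b)" unfolding cube_le_def
    proof (intro conjI allI impI)
      show "length (\<mu> a) = length (\<mu> b)" by (simp add: \<mu>_def)
      fix j assume j: "j < length (\<mu> a)" "\<mu> a ! j"
      then have jn: "j < n" by (simp add: \<mu>_def)
      obtain k where k: "k < r" "G j = rf k" using Gprop[OF jn] by blast
      have "x a ! k" using j(2) muk[OF _ jn k(2)] ab by (simp add: C_def)
      then have "x b ! k" using xle k(1) \<open>length (x a) = r\<close> by (simp add: cube_le_def)
      then show "\<mu> b ! j" using muk[OF _ jn k(2)] ab by (simp add: C_def)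
    qed
  qed
  have A3: "\<forall>a\<in>cube p. \<forall>b\<in>cube p. cube_less a b \<longrightarrow> \<mu> a \<noteq> \<mu> b"
  proof (intro ballI impI)
    fix a b assume ab: "a \<in> cube p" "b \<in> cube p" "cube_less a b"
    then have "x a \<noteq> x b" using si unfolding strictly_increasing_def cube_less_def by blast
    then show "\<mu> a \<noteq> \<mu> b" using decomp ab by (metis C_def)
  qed
  have bot: "G j z = False" if jn: "j < n" for j
  proof (rule ccontr)
    assume "\<not> G j z = False"
    then have Gz: "G j z" by simp
    obtain k where k: "k < r" "G j = rf k" using Gprop[OF jn] by blast
    have "\<forall>c\<in>C. G j c"
    proof
      fix c assume c: "c \<in> C"
      have "cube_le z c" using c by (simp add: C_def cube_def z_def cube_le_def)
      then have "cube_le (x z) (x c)" using mono_x[OF si xr] c zC by (simp add: C_def)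
      moreover have "length (x z) = r" using xr zC by (simp add: C_def cube_def)
      moreover have "x z ! k" using Gz k zC by (simp add: rf_def)
      ultimately have "x c ! k" using k(1) by (simp add: cube_le_def)
      then show "G j c" using k c by (simp add: rf_def)
    qed
    then show False using Gprop[OF jn] by (auto simp: nc_def)
  qed
  define t where "t = replicate p True"
  have tC: "t \<in> C" by (simp add: C_def t_def cube_def)
  have top: "G j t = True" if jn: "j < n" for j
  proof (rule ccontr)
    assume "\<not> G j t = True"
    then have Gt: "\<not> G j t" by simp
    obtain k where k: "k < r" "G j = rf k" using Gprop[OF jn] by blast
    have "\<forall>c\<in>C. \<not> G j c"
    proof
      fix c assume c: "c \<in> C"
      have "cube_le c t" using c by (simp add: C_def cube_def t_def cube_le_def)
      then have "cube_le (x c) (x t)" using mono_x[OF si xr] c tC by (simp add: C_def)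
      moreover have "length (x c) = r" using xr c by (simp add: C_def cube_def)
      moreover have "\<not> x t ! k" using Gt k tC by (simp add: rf_def)
      ultimately have "\<not> x c ! k" using k(1) by (auto simp: cube_le_def)
      then show "\<not> G j c" using k c by (simp add: rf_def)
    qed
    then show False using Gprop[OF jn] by (auto simp: nc_def)
  qed
  have A4: "\<mu> (replicate p False) = replicate n False" "\<mu> (replicate p True) = replicate n True"
    using bot top by (auto simp: \<mu>_def z_def[symmetric] t_def[symmetric] intro!: nth_equalityI)
  interpret cm: chainmap p n \<mu>
    by (unfold_locales) (use A1 A2 A3 A4 in auto)
  show ?thesis
    apply (rule exI[of _ n], rule exI[of _ q], rule exI[of _ \<mu>], rule exI[of _ \<phi>], rule exI[of _ \<psi>])
    using isdec uniq cm.p_le_n cm.strict cm.adj_iff by blast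
qed

end
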